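(* Assume $X$ satisfies the $G$-latent model with covariance $\Sigma=ACA^t+\Gamma$. (i) If $\Delta(C)>\frac{2}{m}|\Gamma|_V$, then $B^*$ is the unique maximizer of $B\mapsto\langle\Sigma,B\rangle$ over $\mathcal{C}$. (ii) If $\Delta(C)>0$, then $B^*$ is the unique maximizer of $B\mapsto\langle\Sigma-\Gamma,B\rangle$ over $\mathcal{C}$.
   Context: Let $G=\{G_1,\dots,G_K\}$ be a partition of $[p]$ into nonempty groups, $k(a)$ the index with $a\in G_{k(a)}$, $m=\min_k|G_k|$. A centered random vector $X$ satisfies the $G$-latent model if $X_a=Z_{k(a)}+E_a$ for all $a$, where $Z\in\mathbb{R}^K$ is centered, $E\in\mathbb{R}^p$ is centered, independent of $Z$, with independent coordinates and $\mathrm{Var}(E_a)=\gamma_{k(a)}$. Then $\Sigma=\mathrm{Cov}(X)=ACA^t+\Gamma$ with $A_{ak}=1_{\{a\in G_k\}}$, $C=\mathrm{Cov}(Z)$, $\Gamma=\mathrm{diag}(\gamma_{k(a)})_a$. $\Delta(C)=\min_{j<k}(C_{jj}+C_{kk}-2C_{jk})$. For diagonal $D$, $|D|_V=\max_aD_{aa}-\min_aD_{aa}$. $B^*$ is the $p\times p$ matrix with $B^*_{ab}=1/|G_k|$ if $a,b\in G_k$ for some $k$, and $0$ otherwise. $\langle M,N\rangle=\mathrm{tr}(M^tN)$. $\mathcal{C}$ is the set of symmetric positive semidefinite $p\times p$ matrices $B$ with $\sum_aB_{ab}=1$ for all $b$, $B_{ab}\ge0$ for all $a,b$, and $\mathrm{tr}(B)=K$.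 *)

theory Defs
  imports Complex_Main
begin

text \<open>Index conventions: variables are indexed by a < p (i.e. [p] = {0..<p}),
  latent factors / groups by k < K.  Matrices are functions nat => nat => real,
  only their entries with indices in range are meaningful.\<close>

definition is_partition :: "nat \<Rightarrow> nat \<Rightarrow> (nat \<Rightarrow> nat set) \<Rightarrow> bool" where
  "is_partition p K G \<longleftrightarrow>
     (\<forall>k<K. G k \<noteq> {}) \<and> (\<forall>k<K. G k \<subseteq> {..<p}) \<and>
     (\<forall>j<K. \<forall>k<K. j \<noteq> k \<longrightarrow> G j \<inter> G k = {}) \<and>
     (\<Union>k<K. G k) = {..<p}"

definition memb :: "(nat \<Rightarrow> nat set) \<Rightarrow> nat \<Rightarrow> nat \<Rightarrow> real" where
  "memb G a k = (if a \<in> G k then 1 else 0)"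

definition ACAt :: "nat \<Rightarrow> (nat \<Rightarrow> nat set) \<Rightarrow> (nat \<Rightarrow> nat \<Rightarrow> real) \<Rightarrow> nat \<Rightarrow> nat \<Rightarrow> real" where
  "ACAt K G C a b = (\<Sum>j<K. \<Sum>k<K. memb G a j * C j k * memb G b k)"

text \<open>Gamma = diag(gamma_{k(a)}); note sum_k A a k * gamma k = gamma_{k(a)} for a partition.\<close>
definition Gamma_mat :: "nat \<Rightarrow> (nat \<Rightarrow> nat set) \<Rightarrow> (nat \<Rightarrow> real) \<Rightarrow> nat \<Rightarrow> nat \<Rightarrow> real" where
  "Gamma_mat K G \<gamma> a b = (if a = b then (\<Sum>k<K. memb G a k * \<gamma> k) else 0)"

definition latent_Sigma :: "nat \<Rightarrow> (nat \<Rightarrow> nat set) \<Rightarrow> (nat \<Rightarrow> nat \<Rightarrow> real) \<Rightarrow> (nat \<Rightarrow> real) \<Rightarrow> nat \<Rightarrow> nat \<Rightarrow> real" where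
  "latent_Sigma K G C \<gamma> a b = ACAt K G C a b + Gamma_mat K G \<gamma> a b"

definition min_group_size :: "nat \<Rightarrow> (nat \<Rightarrow> nat set) \<Rightarrow> nat" where
  "min_group_size K G = Min {card (G k) | k. k < K}"

definition var_norm :: "nat \<Rightarrow> (nat \<Rightarrow> nat \<Rightarrow> real) \<Rightarrow> real" where
  "var_norm p D = Max {D a a | a. a < p} - Min {D a a | a. a < p}"

text \<open>Delta(C) = min_{j<k} (C_jj + C_kk - 2 C_jk).  "t < Delta(C)" is stated as
  the bound holding for every pair j < k < K (this is the same as t < Min, and
  is vacuously true when K < 2, where the minimum over the empty set is +infinity).\<close>
definition Delta_gt :: "nat \<Rightarrow> (nat \<Rightarrow> nat \<Rightarrow> real) \<Rightarrow> real \<Rightarrow> bool" where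
  "Delta_gt K C t \<longleftrightarrow> (\<forall>j k. j < k \<and> k < K \<longrightarrow> t < C j j + C k k - 2 * C j k)"

definition Bstar :: "nat \<Rightarrow> (nat \<Rightarrow> nat set) \<Rightarrow> nat \<Rightarrow> nat \<Rightarrow> real" where
  "Bstar K G a b = (if \<exists>k<K. a \<in> G k \<and> b \<in> G k
                    then 1 / real (card (G (SOME k. k < K \<and> a \<in> G k \<and> b \<in> G k))) else 0)"

definition frob :: "nat \<Rightarrow> (nat \<Rightarrow> nat \<Rightarrow> real) \<Rightarrow> (nat \<Rightarrow> nat \<Rightarrow> real) \<Rightarrow> real" where
  "frob p M N = (\<Sum>a<p. \<Sum>b<p. M a b * N a b)"

definition psd_on :: "nat \<Rightarrow> (nat \<Rightarrow> nat \<Rightarrow> real) \<Rightarrow> bool" where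
  "psd_on n M \<longleftrightarrow> (\<forall>i<n. \<forall>j<n. M i j = M j i) \<and>
     (\<forall>v :: nat \<Rightarrow> real. 0 \<le> (\<Sum>i<n. \<Sum>j<n. v i * M i j * v j))"

definition calC :: "nat \<Rightarrow> nat \<Rightarrow> (nat \<Rightarrow> nat \<Rightarrow> real) \<Rightarrow> bool" where
  "calC p K B \<longleftrightarrow> psd_on p B \<and> (\<forall>b<p. (\<Sum>a<p. B a b) = 1) \<and>
     (\<forall>a<p. \<forall>b<p. 0 \<le> B a b) \<and> (\<Sum>a<p. B a a) = real K"

definition unique_maximizer :: "nat \<Rightarrow> nat \<Rightarrow> (nat \<Rightarrow> nat \<Rightarrow> real) \<Rightarrow> (nat \<Rightarrow> nat \<Rightarrow> real) \<Rightarrow> bool" where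
  "unique_maximizer p K M B0 \<longleftrightarrow> calC p K B0 \<and>
     (\<forall>B. calC p K B \<longrightarrow> frob p M B \<le> frob p M B0) \<and>
     (\<forall>B. calC p K B \<and> frob p M B = frob p M B0 \<longrightarrow> (\<forall>a<p. \<forall>b<p. B a b = B0 a b))"

end

theory Submission imports Defs begin

locale pctx = fixes p K :: nat and G :: "nat \<Rightarrow> nat set"
  assumes part: "is_partition p K G"
begin

definition grp :: "nat \<Rightarrow> nat" where "grp a = (SOME k. k < K \<and> a \<in> G k)"

lemma G_ne: "k < K \<Longrightarrow> G k \<noteq> {}" using part unfolding is_partition_def by auto
lemma G_sub: "k < K \<Longrightarrow> G k \<subseteq> {..<p}" using part unfolding is_partition_def by auto
lemma G_fin: "k < K \<Longrightarrow> finite (G k)" using G_sub finite_subset by blast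
lemma G_card: "k < K \<Longrightarrow> 0 < card (G k)" using G_ne G_fin by (simp add: card_gt_0_iff)
lemma G_disj: "j < K \<Longrightarrow> k < K \<Longrightarrow> a \<in> G j \<Longrightarrow> a \<in> G k \<Longrightarrow> j = k"
  using part unfolding is_partition_def by blast
lemma G_un: "(\<Union>k<K. G k) = {..<p}" using part unfolding is_partition_def by auto

lemma grp: assumes "a < p" shows "grp a < K" "a \<in> G (grp a)"
proof -
  have "\<exists>k. k < K \<and> a \<in> G k" using G_un assms by auto
  then have "grp a < K \<and> a \<in> G (grp a)" unfolding grp_def by (rule someI_ex)
  then show "grp a < K" "a \<in> G (grp a)" by auto
qed

lemma grp_eq: "k < K \<Longrightarrow> a \<in> G k \<Longrightarrow> grp a = k"
  using grp G_disj G_sub by blast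

lemma sum_split: "(\<Sum>a<p. f a) = (\<Sum>k<K. \<Sum>a\<in>G k. f a)"
proof -
  have "(\<Sum>a<p. f a) = sum f (\<Union>(G ` {..<K}))" using G_un by simp
  also have "\<dots> = (\<Sum>k<K. sum f (G k))"
    by (rule sum.UNION_disjoint) (auto simp: G_fin dest: G_disj)
  finally show ?thesis .
qed

lemma memb_grp: assumes "a < p" "k < K" shows "memb G a k = (if k = grp a then 1 else 0)"
proof (cases "k = grp a")
  case True
  then show ?thesis using grp(2)[OF assms(1)] unfolding memb_def by simp
next
  case False
  have "a \<notin> G k"
  proof
    assume "a \<in> G k"
    then have "grp a = k" using grp_eq[of k a] assms(2) by simp
    then show False using False by simp
  qed
  then show ?thesis using False unfolding memb_def by simp
qed

lemma memb_sum: assumes "a < p" shows "(\<Sum>j<K. memb G a j * f j) = f (grp a)"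
proof -
  have "(\<Sum>j<K. memb G a j * f j) = (\<Sum>j<K. if j = grp a then f j else 0)"
    by (rule sum.cong) (auto simp: memb_grp assms)
  also have "\<dots> = f (grp a)" using grp[OF assms] by (simp add: sum.delta')
  finally show ?thesis .
qed

lemma ACAt_eq: assumes "a < p" "b < p" shows "ACAt K G C a b = C (grp a) (grp b)"
proof -
  have "ACAt K G C a b = (\<Sum>j<K. memb G a j * (\<Sum>k<K. memb G b k * C j k))"
    unfolding ACAt_def by (simp add: sum_distrib_left mult.commute mult.left_commute)
  also have "\<dots> = (\<Sum>j<K. memb G a j * C j (grp b))"
    using memb_sum[OF assms(2)] by simp
  also have "\<dots> = C (grp a) (grp b)" using memb_sum[OF assms(1)] by simp
  finally show ?thesis .
qed

lemma Gamma_eq: "a < p \<Longrightarrow> Gamma_mat K G \<gamma> a b = (if a = b then \<gamma> (grp a) else 0)"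
  unfolding Gamma_mat_def by (auto simp: memb_sum)

lemma Bstar_eq: assumes "a < p" "b < p"
  shows "Bstar K G a b = (if grp a = grp b then 1 / real (card (G (grp a))) else 0)"
proof (cases "grp a = grp b")
  case True
  have ga: "grp a < K" "a \<in> G (grp a)" using grp[OF assms(1)] by auto
  have gb: "b \<in> G (grp a)" using grp[OF assms(2)] True by simp
  have ex: "\<exists>k<K. a \<in> G k \<and> b \<in> G k" using ga gb by blast
  have "(SOME k. k < K \<and> a \<in> G k \<and> b \<in> G k) = grp a"
  proof (rule some_equality)
    show "grp a < K \<and> a \<in> G (grp a) \<and> b \<in> G (grp a)" using ga gb by blast
    fix k assume "k < K \<and> a \<in> G k \<and> b \<in> G k"
    then show "k = grp a" using grp_eq by metis
  qed
  then show ?thesis unfolding Bstar_def using True ex by simp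
next
  case False
  have nex: "\<not> (\<exists>k<K. a \<in> G k \<and> b \<in> G k)"
  proof
    assume "\<exists>k<K. a \<in> G k \<and> b \<in> G k"
    then obtain k where "k < K" "a \<in> G k" "b \<in> G k" by blast
    then have "grp a = grp b" using grp_eq by metis
    then show False using False by simp
  qed
  then show ?thesis unfolding Bstar_def using False by (simp only: nex if_False)
qed


definition blk :: "(nat \<Rightarrow> nat \<Rightarrow> real) \<Rightarrow> nat \<Rightarrow> nat \<Rightarrow> real" where
  "blk B j k = (\<Sum>a\<in>G j. \<Sum>b\<in>G k. B a b)"

definition trk :: "(nat \<Rightarrow> nat \<Rightarrow> real) \<Rightarrow> nat \<Rightarrow> real" where
  "trk B k = (\<Sum>a\<in>G k. B a a)"

lemma sum_grp: assumes "\<And>a. a < p \<Longrightarrow> f a = g (grp a) a"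
  shows "(\<Sum>a<p. f a) = (\<Sum>k<K. \<Sum>a\<in>G k. g k a)"
proof -
  have "(\<Sum>a<p. f a) = (\<Sum>k<K. \<Sum>a\<in>G k. f a)" by (rule sum_split)
  also have "\<dots> = (\<Sum>k<K. \<Sum>a\<in>G k. g k a)"
  proof (rule sum.cong[OF refl], rule sum.cong[OF refl])
    fix k a assume "k \<in> {..<K}" "a \<in> G k"
    then have "a < p" "grp a = k" using G_sub grp_eq by auto
    then show "f a = g k a" using assms by simp
  qed
  finally show ?thesis .
qed

lemma frob_grpfun: assumes "\<And>a b. a < p \<Longrightarrow> b < p \<Longrightarrow> M a b = F (grp a) (grp b)"
  shows "frob p M B = (\<Sum>j<K. \<Sum>k<K. F j k * blk B j k)"
proof -
  have "frob p M B = (\<Sum>j<K. \<Sum>a\<in>G j. \<Sum>b<p. F j (grp b) * B a b)"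
    unfolding frob_def by (rule sum_grp) (simp add: assms)
  also have "\<dots> = (\<Sum>j<K. \<Sum>a\<in>G j. \<Sum>k<K. \<Sum>b\<in>G k. F j k * B a b)"
  proof -
    have "\<And>j a. (\<Sum>b<p. F j (grp b) * B a b) = (\<Sum>k<K. \<Sum>b\<in>G k. F j k * B a b)"
      by (rule sum_grp) simp
    then show ?thesis by simp
  qed
  also have "\<dots> = (\<Sum>j<K. \<Sum>k<K. F j k * blk B j k)"
  proof -
    have "\<And>j. (\<Sum>a\<in>G j. \<Sum>k<K. \<Sum>b\<in>G k. F j k * B a b) = (\<Sum>k<K. \<Sum>a\<in>G j. \<Sum>b\<in>G k. F j k * B a b)"
      by (rule sum.swap)
    then show ?thesis by (simp add: blk_def sum_distrib_left)
  qed
  finally show ?thesis .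
qed

lemma frob_diagfun: assumes "\<And>a b. a < p \<Longrightarrow> b < p \<Longrightarrow> M a b = (if a = b then f (grp a) else 0)"
  shows "frob p M B = (\<Sum>k<K. f k * trk B k)"
proof -
  have "frob p M B = (\<Sum>a<p. f (grp a) * B a a)"
    unfolding frob_def
  proof (rule sum.cong[OF refl])
    fix a assume a: "a \<in> {..<p}"
    have "(\<Sum>b<p. M a b * B a b) = (\<Sum>b<p. if b = a then f (grp a) * B a b else 0)"
      by (rule sum.cong) (use a assms in auto)
    also have "\<dots> = f (grp a) * B a a" using a by (simp add: sum.delta')
    finally show "(\<Sum>b<p. M a b * B a b) = f (grp a) * B a a" .
  qed
  also have "\<dots> = (\<Sum>k<K. \<Sum>a\<in>G k. f k * B a a)" by (rule sum_grp) simp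
  also have "\<dots> = (\<Sum>k<K. f k * trk B k)" unfolding trk_def by (simp add: sum_distrib_left)
  finally show ?thesis .
qed

lemma psd_pair: assumes "psd_on p B" "a < p" "b < p"
  shows "B a b \<le> (B a a + B b b) / 2"
proof (cases "a = b")
  case True then show ?thesis by simp
next
  case False
  define v where "v j = (if j = a then 1 else if j = b then -1 else 0 :: real)" for j :: nat
  have va: "v a = 1" and vb: "v b = -1" using False by (auto simp: v_def)
  have sub: "{a, b} \<subseteq> {..<p}" using assms by auto
  have inner: "(\<Sum>j<p. v i * B i j * v j) = v i * B i a - v i * B i b" for i
  proof -
    have "(\<Sum>j<p. v i * B i j * v j) = (\<Sum>j\<in>{a,b}. v i * B i j * v j)"
      by (rule sum.mono_neutral_right) (use sub in \<open>auto simp: v_def\<close>)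
    also have "\<dots> = v i * B i a - v i * B i b" using False va vb by simp
    finally show ?thesis .
  qed
  have "0 \<le> (\<Sum>i<p. \<Sum>j<p. v i * B i j * v j)" using assms(1) unfolding psd_on_def by blast
  also have "\<dots> = (\<Sum>i<p. v i * B i a - v i * B i b)" by (simp add: inner)
  also have "\<dots> = (\<Sum>i\<in>{a,b}. v i * B i a - v i * B i b)"
    by (rule sum.mono_neutral_right) (use sub in \<open>auto simp: v_def\<close>)
  also have "\<dots> = (B a a - B a b) - (B b a - B b b)" using False va vb by simp
  finally have "0 \<le> (B a a - B a b) - (B b a - B b b)" .
  moreover have "B b a = B a b" using assms unfolding psd_on_def by auto
  ultimately show ?thesis by simp
qed


lemma calC_sym: "calC p K B \<Longrightarrow> a < p \<Longrightarrow> b < p \<Longrightarrow> B a b = B b a"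
  unfolding calC_def psd_on_def by blast
lemma calC_nonneg: "calC p K B \<Longrightarrow> a < p \<Longrightarrow> b < p \<Longrightarrow> 0 \<le> B a b"
  unfolding calC_def by blast
lemma calC_row: assumes "calC p K B" "a < p" shows "(\<Sum>b<p. B a b) = 1"
proof -
  have "(\<Sum>b<p. B a b) = (\<Sum>b<p. B b a)" using calC_sym[OF assms(1)] assms(2) by simp
  also have "\<dots> = 1" using assms unfolding calC_def by blast
  finally show ?thesis .
qed
lemma calC_trace: assumes "calC p K B" shows "(\<Sum>k<K. trk B k) = real K"
proof -
  have "(\<Sum>a<p. B a a) = (\<Sum>k<K. \<Sum>a\<in>G k. B a a)" by (rule sum_split)
  then show ?thesis using assms unfolding calC_def trk_def by simp
qed

lemma in_G_lt: "k < K \<Longrightarrow> a \<in> G k \<Longrightarrow> a < p" using G_sub by blast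

lemma blk_nonneg: "calC p K B \<Longrightarrow> j < K \<Longrightarrow> k < K \<Longrightarrow> 0 \<le> blk B j k"
  unfolding blk_def by (intro sum_nonneg) (meson calC_nonneg in_G_lt)

lemma blk_sym: assumes "calC p K B" "j < K" "k < K" shows "blk B j k = blk B k j"
proof -
  have "blk B j k = (\<Sum>b\<in>G k. \<Sum>a\<in>G j. B a b)" unfolding blk_def by (rule sum.swap)
  also have "\<dots> = blk B k j" unfolding blk_def
    by (intro sum.cong refl) (metis assms calC_sym in_G_lt)
  finally show ?thesis .
qed

lemma blk_row: assumes "calC p K B" "j < K" shows "(\<Sum>k<K. blk B j k) = real (card (G j))"
proof -
  have "(\<Sum>k<K. blk B j k) = (\<Sum>a\<in>G j. \<Sum>k<K. \<Sum>b\<in>G k. B a b)" unfolding blk_def by (rule sum.swap)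
  also have "\<dots> = (\<Sum>a\<in>G j. \<Sum>b<p. B a b)" by (simp add: sum_split)
  also have "\<dots> = (\<Sum>a\<in>G j. 1)" by (intro sum.cong refl calC_row[OF assms(1)] in_G_lt[OF assms(2)])
  finally show ?thesis by simp
qed

lemma blk_diag_le: assumes "calC p K B" "k < K"
  shows "blk B k k \<le> real (card (G k)) * trk B k"
proof -
  have "blk B k k \<le> (\<Sum>a\<in>G k. \<Sum>b\<in>G k. (B a a + B b b) / 2)"
    unfolding blk_def
    by (intro sum_mono psd_pair) (use assms in_G_lt in \<open>auto simp: calC_def\<close>)
  also have "\<dots> = real (card (G k)) * trk B k"
    unfolding trk_def by (simp add: sum.distrib add_divide_distrib sum_divide_distrib[symmetric] sum.swap[of "\<lambda>a b. B b b" "G k" "G k"]) (simp add: sum_distrib_left)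
  finally show ?thesis .
qed


definition Ok :: "(nat \<Rightarrow> nat \<Rightarrow> real) \<Rightarrow> nat \<Rightarrow> real" where
  "Ok B k = (\<Sum>j<K. if j \<noteq> k then blk B k j else 0)"
definition Sm :: "(nat \<Rightarrow> nat \<Rightarrow> real) \<Rightarrow> real" where
  "Sm B = (\<Sum>k<K. Ok B k)"

lemma Ok_nonneg: "calC p K B \<Longrightarrow> k < K \<Longrightarrow> 0 \<le> Ok B k"
  unfolding Ok_def by (intro sum_nonneg) (auto intro: blk_nonneg)

lemma blk_split: assumes "k < K" shows "(\<Sum>j<K. blk B k j) = blk B k k + Ok B k"
proof -
  have "(\<Sum>j<K. blk B k j) = (\<Sum>j<K. (if j = k then blk B k k else 0) + (if j \<noteq> k then blk B k j else 0))"
    by (intro sum.cong refl) auto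
  also have "\<dots> = blk B k k + Ok B k" unfolding Ok_def using assms by (simp add: sum.distrib sum.delta')
  finally show ?thesis .
qed

lemma trk_lower: assumes "calC p K B" "k < K"
  shows "real (card (G k)) - Ok B k \<le> real (card (G k)) * trk B k"
  using blk_row[OF assms] blk_split[OF assms(2), of B] blk_diag_le[OF assms] by linarith

lemma Bstar_ab: "k < K \<Longrightarrow> a \<in> G k \<Longrightarrow> j < K \<Longrightarrow> b \<in> G j \<Longrightarrow>
    Bstar K G a b = (if k = j then 1 / real (card (G k)) else 0)"
  using Bstar_eq in_G_lt grp_eq by metis

lemma Bstar_blk: assumes "j < K" "k < K" "j \<noteq> k" shows "blk (Bstar K G) j k = 0"
  unfolding blk_def using assms by (simp add: Bstar_ab cong: sum.cong)

lemma Bstar_trk: assumes "k < K" shows "trk (Bstar K G) k = 1"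
proof -
  have "trk (Bstar K G) k = (\<Sum>a\<in>G k. 1 / real (card (G k)))"
    unfolding trk_def using assms by (intro sum.cong refl) (simp add: Bstar_ab)
  then show ?thesis using G_card[OF assms] by simp
qed

lemma Bstar_calC: "calC p K (Bstar K G)"
proof -
  have sym: "\<forall>i<p. \<forall>j<p. Bstar K G i j = Bstar K G j i" by (simp add: Bstar_eq)
  have quad: "0 \<le> (\<Sum>i<p. \<Sum>j<p. v i * Bstar K G i j * v j)" for v :: "nat \<Rightarrow> real"
  proof -
    have "(\<Sum>i<p. \<Sum>j<p. v i * Bstar K G i j * v j) = frob p (Bstar K G) (\<lambda>i j. v i * v j)"
      unfolding frob_def by (simp add: algebra_simps)
    also have "\<dots> = (\<Sum>j<K. \<Sum>k<K. (if j = k then 1 / real (card (G j)) else 0) * blk (\<lambda>i j. v i * v j) j k)"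
      by (rule frob_grpfun) (simp add: Bstar_eq)
    also have "\<dots> = (\<Sum>j<K. blk (\<lambda>i j. v i * v j) j j / real (card (G j)))"
    proof (rule sum.cong[OF refl])
      fix j assume "j \<in> {..<K}"
      have "(\<Sum>k<K. (if j = k then 1 / real (card (G j)) else 0) * blk (\<lambda>i j. v i * v j) j k)
          = (\<Sum>k<K. if j = k then blk (\<lambda>i j. v i * v j) j k / real (card (G j)) else 0)"
        by (intro sum.cong refl) auto
      then show "(\<Sum>k<K. (if j = k then 1 / real (card (G j)) else 0) * blk (\<lambda>i j. v i * v j) j k)
          = blk (\<lambda>i j. v i * v j) j j / real (card (G j))" using \<open>j \<in> {..<K}\<close> by (simp add: sum.delta)
    qed
    also have "\<dots> \<ge> 0"
    proof (intro sum_nonneg divide_nonneg_nonneg)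
      fix j
      have "blk (\<lambda>i j. v i * v j) j j = (\<Sum>a\<in>G j. v a) * (\<Sum>b\<in>G j. v b)"
        unfolding blk_def by (simp add: sum_product)
      then show "0 \<le> blk (\<lambda>i j. v i * v j) j j" by simp
    qed simp
    finally show ?thesis .
  qed
  have col: "(\<Sum>a<p. Bstar K G a b) = 1" if b: "b < p" for b
  proof -
    have "(\<Sum>a<p. Bstar K G a b) = (\<Sum>k<K. \<Sum>a\<in>G k. if k = grp b then 1 / real (card (G k)) else 0)"
      by (rule sum_grp) (simp add: Bstar_eq b)
    also have "\<dots> = (\<Sum>k<K. if k = grp b then (\<Sum>a\<in>G k. 1 / real (card (G k))) else 0)"
      by (intro sum.cong refl) auto
    also have "\<dots> = 1" using grp[OF b] G_card[OF grp(1)[OF b]] by (simp add: sum.delta')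
    finally show ?thesis .
  qed
  have nn: "\<forall>a<p. \<forall>b<p. 0 \<le> Bstar K G a b" by (simp add: Bstar_eq)
  have tr: "(\<Sum>a<p. Bstar K G a a) = real K"
  proof -
    have "(\<Sum>a<p. Bstar K G a a) = (\<Sum>k<K. trk (Bstar K G) k)" unfolding trk_def by (rule sum_split)
    also have "\<dots> = real K" by (simp add: Bstar_trk)
    finally show ?thesis .
  qed
  show ?thesis unfolding calC_def psd_on_def using sym quad col nn tr by blast
qed


definition Dl :: "(nat \<Rightarrow> nat \<Rightarrow> real) \<Rightarrow> (nat \<Rightarrow> nat \<Rightarrow> real) \<Rightarrow> real" where
  "Dl C B = (\<Sum>j<K. \<Sum>k<K. (C j j - C j k) * blk B j k)"

lemma frob_ACAt: assumes "calC p K B"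
  shows "frob p (ACAt K G C) B = (\<Sum>j<K. C j j * real (card (G j))) - Dl C B"
proof -
  have "frob p (ACAt K G C) B = (\<Sum>j<K. \<Sum>k<K. C j k * blk B j k)"
    by (rule frob_grpfun) (simp add: ACAt_eq)
  moreover have "(\<Sum>j<K. C j j * real (card (G j))) = (\<Sum>j<K. \<Sum>k<K. C j j * blk B j k)"
    by (intro sum.cong refl) (simp add: blk_row[OF assms] sum_distrib_left[symmetric])
  ultimately show ?thesis unfolding Dl_def by (simp add: sum_subtractf left_diff_distrib)
qed

lemma Dl_Bstar: "Dl C (Bstar K G) = 0"
  unfolding Dl_def
proof (intro sum.neutral ballI)
  fix j k assume "j \<in> {..<K}" "k \<in> {..<K}"
  then show "(C j j - C j k) * blk (Bstar K G) j k = 0" by (cases "j = k") (auto simp: Bstar_blk)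
qed

lemma Dl_bound: assumes B: "calC p K B" and Csym: "\<forall>j<K. \<forall>k<K. C j k = C k j"
    and D: "Delta_gt K C t"
  shows "t * Sm B \<le> 2 * Dl C B"
    and "2 * Dl C B = t * Sm B \<Longrightarrow> \<forall>j<K. \<forall>k<K. j \<noteq> k \<longrightarrow> blk B j k = 0"
proof -
  define e where "e j k = (C j j + C k k - 2 * C j k) * blk B j k - t * (if j \<noteq> k then blk B j k else 0)" for j k
  have Dl2: "Dl C B = (\<Sum>j<K. \<Sum>k<K. (C k k - C j k) * blk B j k)"
  proof -
    have "Dl C B = (\<Sum>k<K. \<Sum>j<K. (C j j - C j k) * blk B j k)" unfolding Dl_def by (rule sum.swap)
    also have "\<dots> = (\<Sum>k<K. \<Sum>j<K. (C j j - C k j) * blk B k j)"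
      by (intro sum.cong refl) (use Csym blk_sym[OF B] in auto)
    finally show ?thesis .
  qed
  have Sm2: "Sm B = (\<Sum>j<K. \<Sum>k<K. if j \<noteq> k then blk B j k else 0)"
    unfolding Sm_def Ok_def by (intro sum.cong refl) auto
  have eq: "2 * Dl C B - t * Sm B = (\<Sum>j<K. \<Sum>k<K. e j k)"
  proof -
    have "2 * Dl C B = Dl C B + Dl C B" by simp
    also have "\<dots> = (\<Sum>j<K. \<Sum>k<K. (C j j - C j k) * blk B j k) + (\<Sum>j<K. \<Sum>k<K. (C k k - C j k) * blk B j k)"
      using Dl2 unfolding Dl_def by linarith
    also have "\<dots> = (\<Sum>j<K. \<Sum>k<K. (C j j - C j k) * blk B j k + (C k k - C j k) * blk B j k)"
      by (simp add: sum.distrib)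
    also have "\<dots> = (\<Sum>j<K. \<Sum>k<K. (C j j + C k k - 2 * C j k) * blk B j k)"
      by (intro sum.cong refl) (simp add: algebra_simps)
    finally show ?thesis unfolding Sm2 e_def by (simp add: sum_subtractf sum_distrib_left)
  qed
  have enn: "0 \<le> e j k" if "j < K" "k < K" for j k
  proof (cases "j = k")
    case True then show ?thesis by (simp add: e_def)
  next
    case False
    have "t < C j j + C k k - 2 * C j k"
    proof (cases "j < k")
      case True then show ?thesis using D \<open>k < K\<close> unfolding Delta_gt_def by blast
    next
      case False
      then have "k < j" using \<open>j \<noteq> k\<close> by simp
      then have "t < C k k + C j j - 2 * C k j" using D \<open>j < K\<close> unfolding Delta_gt_def by blast
      then show ?thesis using Csym that by auto
    qed
    then have "0 \<le> (C j j + C k k - 2 * C j k - t) * blk B j k"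
      using blk_nonneg[OF B that] by simp
    then show ?thesis using False by (simp add: e_def algebra_simps)
  qed
  have sum_nn: "0 \<le> (\<Sum>j<K. \<Sum>k<K. e j k)" by (intro sum_nonneg) (simp add: enn)
  then show "t * Sm B \<le> 2 * Dl C B" using eq by simp
  assume eq0: "2 * Dl C B = t * Sm B"
  then have "(\<Sum>j<K. \<Sum>k<K. e j k) = 0" using eq by simp
  moreover have inn: "\<forall>j\<in>{..<K}. 0 \<le> sum (e j) {..<K}" by (auto intro!: sum_nonneg simp: enn)
  ultimately have r0: "\<forall>j\<in>{..<K}. sum (e j) {..<K} = 0"
    using sum_nonneg_eq_0_iff[of "{..<K}" "\<lambda>j. sum (e j) {..<K}"] by simp
  have all0: "\<forall>j<K. \<forall>k<K. e j k = 0"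
  proof (intro allI impI)
    fix j k assume "j < K" "k < K"
    then have "sum (e j) {..<K} = 0" "\<forall>k\<in>{..<K}. 0 \<le> e j k" using r0 enn by auto
    then show "e j k = 0" using sum_nonneg_eq_0_iff[of "{..<K}" "e j"] \<open>k < K\<close> by simp
  qed
  show "\<forall>j<K. \<forall>k<K. j \<noteq> k \<longrightarrow> blk B j k = 0"
  proof (intro allI impI)
    fix j k assume jk: "j < K" "k < K" "j \<noteq> k"
    have "t < C j j + C k k - 2 * C j k"
    proof (cases "j < k")
      case True then show ?thesis using D jk unfolding Delta_gt_def by blast
    next
      case False
      then have "k < j" using jk by simp
      then have "t < C k k + C j j - 2 * C k j" using D jk unfolding Delta_gt_def by blast
      then show ?thesis using Csym jk by auto
    qed
    moreover have "(C j j + C k k - 2 * C j k - t) * blk B j k = 0"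
      using all0 jk by (simp add: e_def algebra_simps)
    ultimately show "blk B j k = 0" by simp
  qed
qed


lemma frob_Gamma: "frob p (Gamma_mat K G \<gamma>) B = (\<Sum>k<K. \<gamma> k * trk B k)"
  by (rule frob_diagfun) (simp add: Gamma_eq)

lemma mgs: assumes "k < K" shows "0 < min_group_size K G" "min_group_size K G \<le> card (G k)"
proof -
  have fin: "finite {card (G k) | k. k < K}" by simp
  have mem: "card (G k) \<in> {card (G k) | k. k < K}" using assms by blast
  show "min_group_size K G \<le> card (G k)" unfolding min_group_size_def using fin mem by (rule Min_le)
  have "min_group_size K G \<in> {card (G k) | k. k < K}" unfolding min_group_size_def
    using fin mem by (intro Min_in) auto
  then show "0 < min_group_size K G" using G_card by auto
qed

lemma Gamma_bound: assumes B: "calC p K B"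
  shows "frob p (Gamma_mat K G \<gamma>) B - frob p (Gamma_mat K G \<gamma>) (Bstar K G)
         \<le> var_norm p (Gamma_mat K G \<gamma>) * Sm B / real (min_group_size K G)"
proof -
  define m where "m = real (min_group_size K G)"
  define Sg where "Sg = {Gamma_mat K G \<gamma> a a | a. a < p}"
  define Mx where "Mx = Max Sg"
  define Mn where "Mn = Min Sg"
  define u where "u k = trk B k - 1" for k
  have finSg: "finite Sg" unfolding Sg_def by simp
  have inSg: "\<gamma> k \<in> Sg" if k: "k < K" for k
  proof -
    obtain a where a: "a \<in> G k" using G_ne[OF k] by blast
    then have "a < p" using in_G_lt k by blast
    moreover have "grp a = k" using grp_eq k a by blast
    ultimately have "Gamma_mat K G \<gamma> a a = \<gamma> k" "a < p" using Gamma_eq by auto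
    then show ?thesis unfolding Sg_def by (metis (mono_tags, lifting) mem_Collect_eq)
  qed
  have gb: "Mn \<le> \<gamma> k" "\<gamma> k \<le> Mx" if "k < K" for k
    unfolding Mx_def Mn_def using finSg inSg[OF that] by auto
  have V: "var_norm p (Gamma_mat K G \<gamma>) = Mx - Mn" unfolding var_norm_def Mx_def Mn_def Sg_def by simp
  have usum: "(\<Sum>k<K. u k) = 0" unfolding u_def using calC_trace[OF B] by (simp add: sum_subtractf)
  have ulow: "- (Ok B k / m) \<le> u k" if "k < K" for k
  proof -
    have n0: "0 < real (card (G k))" using G_card[OF that] by simp
    have "real (card (G k)) - Ok B k \<le> real (card (G k)) * trk B k" by (rule trk_lower[OF B that])
    then have "1 - Ok B k / real (card (G k)) \<le> trk B k" using n0 by (simp add: field_simps)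
    moreover have "Ok B k / real (card (G k)) \<le> Ok B k / m"
      unfolding m_def using mgs[OF that] Ok_nonneg[OF B that] by (intro divide_left_mono) auto
    ultimately show ?thesis unfolding u_def by linarith
  qed
  have "frob p (Gamma_mat K G \<gamma>) B - frob p (Gamma_mat K G \<gamma>) (Bstar K G) = (\<Sum>k<K. \<gamma> k * u k)"
    unfolding frob_Gamma u_def by (simp add: Bstar_trk sum_subtractf right_diff_distrib)
  also have "\<dots> = (\<Sum>k<K. (\<gamma> k - Mx) * u k) + Mx * (\<Sum>k<K. u k)"
    by (simp add: sum_distrib_left sum.distrib[symmetric] algebra_simps)
  also have "\<dots> = (\<Sum>k<K. (\<gamma> k - Mx) * u k)" using usum by simp
  also have "\<dots> \<le> (\<Sum>k<K. (Mx - Mn) * (Ok B k / m))"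
  proof (rule sum_mono)
    fix k assume "k \<in> {..<K}"
    then have k: "k < K" by simp
    have "(\<gamma> k - Mx) * u k \<le> (\<gamma> k - Mx) * (- (Ok B k / m))"
      using gb[OF k] ulow[OF k] by (intro mult_left_mono_neg) auto
    also have "\<dots> = (Mx - \<gamma> k) * (Ok B k / m)" by (metis minus_diff_eq mult_minus_left mult_minus_right)
    also have "\<dots> \<le> (Mx - Mn) * (Ok B k / m)"
      using gb[OF k] Ok_nonneg[OF B k] unfolding m_def by (intro mult_right_mono) auto
    finally show "(\<gamma> k - Mx) * u k \<le> (Mx - Mn) * (Ok B k / m)" .
  qed
  also have "\<dots> = var_norm p (Gamma_mat K G \<gamma>) * Sm B / real (min_group_size K G)"
    unfolding V Sm_def m_def by (simp add: sum_distrib_left sum_divide_distrib)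
  finally show ?thesis .
qed

lemma blockdiag: assumes B: "calC p K B" and off: "\<forall>j<K. \<forall>k<K. j \<noteq> k \<longrightarrow> blk B j k = 0"
  shows "\<forall>a<p. \<forall>b<p. B a b = Bstar K G a b"
proof -
  have O0: "Ok B k = 0" if "k < K" for k unfolding Ok_def using off that by (intro sum.neutral) auto
  have tge: "1 \<le> trk B k" if "k < K" for k
    using trk_lower[OF B that] O0[OF that] G_card[OF that] by simp
  have tsum: "(\<Sum>k<K. trk B k - 1) = 0" using calC_trace[OF B] by (simp add: sum_subtractf)
  have t1: "trk B k = 1" if "k < K" for k
  proof -
    have "\<forall>k\<in>{..<K}. trk B k - 1 = 0"
      using sum_nonneg_eq_0_iff[of "{..<K}" "\<lambda>k. trk B k - 1"] tsum tge by auto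
    then show ?thesis using that by simp
  qed
  have zero_off: "B a b = 0" if "j < K" "k < K" "j \<noteq> k" "a \<in> G j" "b \<in> G k" for j k a b
  proof -
    have nn: "\<forall>a\<in>G j. \<forall>b\<in>G k. 0 \<le> B a b" using calC_nonneg[OF B] in_G_lt that by blast
    have "(\<Sum>a\<in>G j. \<Sum>b\<in>G k. B a b) = 0" using off that unfolding blk_def by blast
    then have "\<forall>a\<in>G j. (\<Sum>b\<in>G k. B a b) = 0"
      using sum_nonneg_eq_0_iff[of "G j" "\<lambda>a. \<Sum>b\<in>G k. B a b"] G_fin[OF that(1)] nn
      by (simp add: sum_nonneg)
    then have "(\<Sum>b\<in>G k. B a b) = 0" using that by blast
    then show ?thesis using sum_nonneg_eq_0_iff[of "G k" "\<lambda>b. B a b"] G_fin[OF that(2)] nn that by simp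
  qed
  have in_grp: "B a b = (B a a + B b b) / 2" if k: "k < K" and ab: "a \<in> G k" "b \<in> G k" for k a b
  proof -
    define f where "f a b = (B a a + B b b) / 2 - B a b" for a b
    have fnn: "\<forall>a\<in>G k. \<forall>b\<in>G k. 0 \<le> f a b"
      unfolding f_def using psd_pair B in_G_lt k unfolding calC_def by fastforce
    have "blk B k k = real (card (G k))" using blk_row[OF B k] blk_split[OF k, of B] O0[OF k] by simp
    moreover have "(\<Sum>a\<in>G k. \<Sum>b\<in>G k. (B a a + B b b) / 2) = real (card (G k)) * trk B k"
      unfolding trk_def by (simp add: sum.distrib add_divide_distrib sum_divide_distrib[symmetric] sum.swap[of "\<lambda>a b. B b b" "G k" "G k"]) (simp add: sum_distrib_left)
    ultimately have "(\<Sum>a\<in>G k. \<Sum>b\<in>G k. f a b) = 0"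
      unfolding f_def blk_def using t1[OF k] by (simp add: sum_subtractf)
    then have "\<forall>a\<in>G k. (\<Sum>b\<in>G k. f a b) = 0"
      using sum_nonneg_eq_0_iff[of "G k" "\<lambda>a. \<Sum>b\<in>G k. f a b"] G_fin[OF k] fnn
      by (simp add: sum_nonneg)
    then have "(\<Sum>b\<in>G k. f a b) = 0" using ab by blast
    then have "f a b = 0" using sum_nonneg_eq_0_iff[of "G k" "\<lambda>b. f a b"] G_fin[OF k] fnn ab by simp
    then show ?thesis unfolding f_def by simp
  qed
  have diag: "B a a = 1 / real (card (G k))" if k: "k < K" and a: "a \<in> G k" for k a
  proof -
    have ap: "a < p" using in_G_lt k a by blast
    have "1 = (\<Sum>b<p. B a b)" using calC_row[OF B ap] by simp
    also have "\<dots> = (\<Sum>j<K. \<Sum>b\<in>G j. B a b)" by (rule sum_split)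
    also have "\<dots> = (\<Sum>j<K. if j = k then (\<Sum>b\<in>G k. B a b) else 0)"
      by (intro sum.cong refl) (use zero_off k a in auto)
    also have "\<dots> = (\<Sum>b\<in>G k. B a b)" using k by (simp add: sum.delta')
    also have "\<dots> = (\<Sum>b\<in>G k. (B a a + B b b) / 2)" by (intro sum.cong refl in_grp[OF k a])
    also have "\<dots> = (real (card (G k)) * B a a + trk B k) / 2"
      unfolding trk_def by (simp add: sum.distrib add_divide_distrib sum_divide_distrib[symmetric])
    finally have "1 = (real (card (G k)) * B a a + 1) / 2" using t1[OF k] by simp
    then show ?thesis using G_card[OF k] by (simp add: field_simps)
  qed
  show ?thesis
  proof (intro allI impI)
    fix a b assume ab: "a < p" "b < p"
    show "B a b = Bstar K G a b"
    proof (cases "grp a = grp b")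
      case True
      then show ?thesis using in_grp[OF grp(1)[OF ab(1)] grp(2)[OF ab(1)], of b] grp[OF ab(2)]
          diag[OF grp(1)[OF ab(1)] grp(2)[OF ab(1)]] diag[OF grp(1)[OF ab(2)] grp(2)[OF ab(2)]]
        by (simp add: Bstar_eq ab)
    next
      case False
      then show ?thesis using zero_off[OF grp(1)[OF ab(1)] grp(1)[OF ab(2)] False grp(2)[OF ab(1)] grp(2)[OF ab(2)]]
        by (simp add: Bstar_eq ab)
    qed
  qed
qed

end

lemma frob_add: "frob p (latent_Sigma K G C \<gamma>) B = frob p (ACAt K G C) B + frob p (Gamma_mat K G \<gamma>) B"
  unfolding frob_def latent_Sigma_def by (simp add: sum.distrib distrib_right)

theorem mainTheorem4:
  fixes p K :: nat and G :: "nat \<Rightarrow> nat set"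
    and C :: "nat \<Rightarrow> nat \<Rightarrow> real" and \<gamma> :: "nat \<Rightarrow> real"
  assumes part: "is_partition p K G"
    and C_cov: "psd_on K C"
    and gamma_nonneg: "\<forall>k<K. 0 \<le> \<gamma> k"
  shows "(Delta_gt K C (2 / real (min_group_size K G) * var_norm p (Gamma_mat K G \<gamma>))
            \<longrightarrow> unique_maximizer p K (latent_Sigma K G C \<gamma>) (Bstar K G))
       \<and> (Delta_gt K C 0
            \<longrightarrow> unique_maximizer p K (\<lambda>a b. latent_Sigma K G C \<gamma> a b - Gamma_mat K G \<gamma> a b) (Bstar K G))"
proof -
  interpret P: pctx p K G by unfold_locales (rule part)
  have Csym: "\<forall>j<K. \<forall>k<K. C j k = C k j" using C_cov unfolding psd_on_def by blast
  have BsC: "calC p K (Bstar K G)" by (rule P.Bstar_calC)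
  have Adiff: "frob p (ACAt K G C) (Bstar K G) - frob p (ACAt K G C) B = P.Dl C B" if B: "calC p K B" for B
    using P.frob_ACAt[OF B] P.frob_ACAt[OF BsC] P.Dl_Bstar[of C] by simp
  define m where "m = real (min_group_size K G)"
  define V where "V = var_norm p (Gamma_mat K G \<gamma>)"
  have part1: "unique_maximizer p K (latent_Sigma K G C \<gamma>) (Bstar K G)"
    if D: "Delta_gt K C (2 / m * V)"
  proof -
    have key: "0 \<le> (2 * P.Dl C B - 2 / m * V * P.Sm B) / 2 \<and>
               (2 * P.Dl C B - 2 / m * V * P.Sm B) / 2
                 \<le> frob p (latent_Sigma K G C \<gamma>) (Bstar K G) - frob p (latent_Sigma K G C \<gamma>) B"
      if B: "calC p K B" for B
    proof
      show "0 \<le> (2 * P.Dl C B - 2 / m * V * P.Sm B) / 2"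
        using P.Dl_bound(1)[OF B Csym D] by simp
      have G: "frob p (Gamma_mat K G \<gamma>) B - frob p (Gamma_mat K G \<gamma>) (Bstar K G) \<le> V * P.Sm B / m"
        using P.Gamma_bound[OF B] unfolding V_def m_def .
      have "(2 * P.Dl C B - 2 / m * V * P.Sm B) / 2 = P.Dl C B - V * P.Sm B / m" by simp
      then show "(2 * P.Dl C B - 2 / m * V * P.Sm B) / 2
                 \<le> frob p (latent_Sigma K G C \<gamma>) (Bstar K G) - frob p (latent_Sigma K G C \<gamma>) B"
        using G Adiff[OF B] unfolding frob_add by linarith
    qed
    show ?thesis unfolding unique_maximizer_def
    proof (intro conjI allI impI)
      show "calC p K (Bstar K G)" by (rule BsC)
      fix B assume B: "calC p K B"
      then show "frob p (latent_Sigma K G C \<gamma>) B \<le> frob p (latent_Sigma K G C \<gamma>) (Bstar K G)"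
        using key[OF B] by linarith
    next
      fix B assume H: "calC p K B \<and> frob p (latent_Sigma K G C \<gamma>) B = frob p (latent_Sigma K G C \<gamma>) (Bstar K G)"
      fix a b assume ab: "a < p" "b < p"
      from H have B: "calC p K B" by simp
      have k1: "0 \<le> (2 * P.Dl C B - 2 / m * V * P.Sm B) / 2" and
        k2: "(2 * P.Dl C B - 2 / m * V * P.Sm B) / 2 \<le> frob p (latent_Sigma K G C \<gamma>) (Bstar K G) - frob p (latent_Sigma K G C \<gamma>) B"
        using key[OF B] by auto
      have "(2 * P.Dl C B - 2 / m * V * P.Sm B) / 2 = 0" using k1 k2 H by linarith
      then have "2 * P.Dl C B = 2 / m * V * P.Sm B" by simp
      then have "\<forall>j<K. \<forall>k<K. j \<noteq> k \<longrightarrow> P.blk B j k = 0" by (rule P.Dl_bound(2)[OF B Csym D])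
      then have "\<forall>a<p. \<forall>b<p. B a b = Bstar K G a b" by (rule P.blockdiag[OF B])
      then show "B a b = Bstar K G a b" using ab by blast
    qed
  qed
  have part2: "unique_maximizer p K (\<lambda>a b. latent_Sigma K G C \<gamma> a b - Gamma_mat K G \<gamma> a b) (Bstar K G)"
    if D: "Delta_gt K C 0"
  proof -
    have eqf: "(\<lambda>a b. latent_Sigma K G C \<gamma> a b - Gamma_mat K G \<gamma> a b) = ACAt K G C"
      by (intro ext) (simp add: latent_Sigma_def)
    show ?thesis unfolding unique_maximizer_def eqf
    proof (intro conjI allI impI)
      show "calC p K (Bstar K G)" by (rule BsC)
      fix B assume B: "calC p K B"
      then show "frob p (ACAt K G C) B \<le> frob p (ACAt K G C) (Bstar K G)"
        using Adiff[OF B] P.Dl_bound(1)[OF B Csym D] by simp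
    next
      fix B assume H: "calC p K B \<and> frob p (ACAt K G C) B = frob p (ACAt K G C) (Bstar K G)"
      fix a b assume ab: "a < p" "b < p"
      from H have B: "calC p K B" by simp
      have "2 * P.Dl C B = 0 * P.Sm B" using Adiff[OF B] H by simp
      then have "\<forall>j<K. \<forall>k<K. j \<noteq> k \<longrightarrow> P.blk B j k = 0" by (rule P.Dl_bound(2)[OF B Csym D])
      then have "\<forall>a<p. \<forall>b<p. B a b = Bstar K G a b" by (rule P.blockdiag[OF B])
      then show "B a b = Bstar K G a b" using ab by blast
    qed
  qed
  show ?thesis using part1 part2 unfolding m_def V_def by blast
qed

end
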